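(* Let $\mathcal X$ be locally convex and let $\rho$ be proper, quasiconvex and lower semicontinuous. Then $\mathcal B$ is nonempty and $$\rho(X)=\sup_{\psi\in\mathcal B}\rho(X|\psi)\quad\text{for all }X\in\mathcal X.$$
   Context: Standing setup: Let $\mathcal{X}$ be a real topological vector space partially ordered by a convex cone $\mathcal{X}_+\subset\mathcal X$; write $X\ge Y$ iff $X-Y\in\mathcal X_+$. Fix $N\in\mathbb N$ and: a set $\mathcal P\subset\mathbb R^N$ with $0\in\mathcal P$; a function $V_0:\mathbb R^N\to\mathbb R$ with $V_0(0)=0$ and $V_0(x)\ge -V_0(-x)$ for all $x\in\mathbb R^N$; a map $V_1:\mathbb R^N\to\mathcal X$ with $V_1(0)=0$ and $V_1(x)\le -V_1(-x)$ for all $x\in\mathbb R^N$; a set $\mathcal A\subset\mathcal X$ with $0\in\mathcal A$ and $\mathcal A+\mathcal X_+\subset\mathcal A$. The risk measure is $\rho:\mathcal X\to[-\infty,\infty]$, $\rho(X)=\inf\{V_0(x): x\in\mathcal P,\ X+V_1(x)\in\mathcal A\}$, with $\inf\emptyset=+\infty$. $\rho$ is proper if it never takes the value $-\infty$ and is not identically $+\infty$; quasiconvex if $\rho(\lambda X+(1-\lambda)Y)\le\max\{\rho(X),\rho(Y)\}$ for $\lambda\in[0,1]$. $\mathcal X'$ is the topological dual of $\mathcal X$. For $\psi\in\mathcal X'$: $\sigma_{\mathcal A}(\psi)=\inf_{X\in\mathcal A}\psi(X)$ and $\mathcal B=\{\psi\in\mathcal X':\sigma_{\mathcal A}(\psi)>-\infty\}$.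 For $X\in\mathcal X$, $\psi\in\mathcal X'$: $\rho(X|\psi)=\inf\{\rho(Y): Y\in\mathcal X,\ \psi(Y)\le\psi(X)\}$. *)

theory Defs
  imports "HOL-Analysis.Analysis"
begin

definition topological_vector_space :: "'a::{real_vector,topological_space} itself \<Rightarrow> bool" where
  "topological_vector_space T \<longleftrightarrow>
     continuous_on UNIV (\<lambda>p::'a \<times> 'a. fst p + snd p) \<and>
     continuous_on UNIV (\<lambda>p::real \<times> 'a. fst p *\<^sub>R snd p)"

definition locally_convex :: "'a::{real_vector,topological_space} itself \<Rightarrow> bool" where
  "locally_convex T \<longleftrightarrow>
     (\<forall>U::'a set. open U \<and> 0 \<in> U \<longrightarrow> (\<exists>V. open V \<and> convex V \<and> 0 \<in> V \<and> V \<subseteq> U))"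

definition top_dual :: "('a::{real_vector,topological_space} \<Rightarrow> real) set" where
  "top_dual = {\<psi>. linear \<psi> \<and> continuous_on UNIV \<psi>}"

definition cone_le :: "'a::real_vector set \<Rightarrow> 'a \<Rightarrow> 'a \<Rightarrow> bool" where
  "cone_le C X Y \<longleftrightarrow> Y - X \<in> C"

text \<open>The risk measure rho(X) = inf { V0 x : x \<in> P, X + V1 x \<in> A }, inf of empty = +\<infinity>.\<close>
definition risk_measure ::
  "(real^'n::finite) set \<Rightarrow> (real^'n \<Rightarrow> real) \<Rightarrow> (real^'n \<Rightarrow> 'a::real_vector) \<Rightarrow> 'a set \<Rightarrow> 'a \<Rightarrow> ereal"
  where "risk_measure P V0 V1 A X = Inf {ereal (V0 x) | x. x \<in> P \<and> X + V1 x \<in> A}"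

definition support_inf :: "'a set \<Rightarrow> ('a \<Rightarrow> real) \<Rightarrow> ereal" where
  "support_inf A \<psi> = Inf ((\<lambda>X. ereal (\<psi> X)) ` A)"

definition barrier_cone :: "'a::{real_vector,topological_space} set \<Rightarrow> ('a \<Rightarrow> real) set" where
  "barrier_cone A = {\<psi> \<in> top_dual. support_inf A \<psi> > -\<infinity>}"

definition cond_risk :: "('a \<Rightarrow> ereal) \<Rightarrow> 'a \<Rightarrow> ('a \<Rightarrow> real) \<Rightarrow> ereal" where
  "cond_risk \<rho> X \<psi> = Inf {\<rho> Y | Y. \<psi> Y \<le> \<psi> X}"

definition proper_risk :: "('a \<Rightarrow> ereal) \<Rightarrow> bool" where
  "proper_risk \<rho> \<longleftrightarrow> (\<forall>X. \<rho> X \<noteq> -\<infinity>) \<and> (\<exists>X. \<rho> X \<noteq> \<infinity>)"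

definition quasiconvex_fun :: "('a::real_vector \<Rightarrow> ereal) \<Rightarrow> bool" where
  "quasiconvex_fun \<rho> \<longleftrightarrow>
     (\<forall>X Y (l::real). 0 \<le> l \<and> l \<le> 1 \<longrightarrow> \<rho> (l *\<^sub>R X + (1 - l) *\<^sub>R Y) \<le> max (\<rho> X) (\<rho> Y))"

definition lsc_fun :: "('a::topological_space \<Rightarrow> ereal) \<Rightarrow> bool" where
  "lsc_fun \<rho> \<longleftrightarrow> (\<forall>c. closed {X. \<rho> X \<le> c})"

end

theory Submission
  imports Defs
begin


definition hb_ok :: "('a::real_vector \<Rightarrow> real) \<Rightarrow> 'a \<Rightarrow> ('a \<times> real) set \<Rightarrow> bool" where
 "hb_ok p z0 G \<longleftrightarrow> {(t *\<^sub>R z0, t * p z0) | t. True} \<subseteq> G \<and>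
   (\<forall>x a b. (x,a)\<in>G \<longrightarrow> (x,b)\<in>G \<longrightarrow> a = b) \<and>
   (\<forall>x y a b. (x,a)\<in>G \<longrightarrow> (y,b)\<in>G \<longrightarrow> (x+y,a+b)\<in>G) \<and>
   (\<forall>x a c. (x,a)\<in>G \<longrightarrow> (c *\<^sub>R x, c*a)\<in>G) \<and>
   (\<forall>x a. (x,a)\<in>G \<longrightarrow> a \<le> p x)"

lemma hb_chain:
  assumes "C \<in> chains {G. hb_ok p z0 G}" "C \<noteq> {}"
  shows "hb_ok p z0 (\<Union>C)"
proof -
  have ok: "\<And>G. G \<in> C \<Longrightarrow> hb_ok p z0 G" and ch: "\<And>G H. G \<in> C \<Longrightarrow> H \<in> C \<Longrightarrow> G \<subseteq> H \<or> H \<subseteq> G"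
    using assms(1) by (auto simp: chains_def chain_subset_def)
  have two: "\<exists>G\<in>C. u \<in> G \<and> v \<in> G" if "u \<in> \<Union>C" "v \<in> \<Union>C" for u v
    using that ch by blast
  from assms(2) obtain G1 where "G1 \<in> C" by auto
  show ?thesis unfolding hb_ok_def
  proof (intro conjI allI impI)
    show "{(t *\<^sub>R z0, t * p z0) | t. True} \<subseteq> \<Union>C"
      using ok[OF \<open>G1 \<in> C\<close>] \<open>G1 \<in> C\<close> unfolding hb_ok_def by blast
  next
    fix x a b assume "(x,a) \<in> \<Union>C" "(x,b) \<in> \<Union>C"
    then obtain G where "G \<in> C" "(x,a) \<in> G" "(x,b) \<in> G" using two by blast
    then show "a = b" using ok unfolding hb_ok_def by blast
  next
    fix x y a b assume "(x,a) \<in> \<Union>C" "(y,b) \<in> \<Union>C"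
    then obtain G where "G \<in> C" "(x,a) \<in> G" "(y,b) \<in> G" using two by blast
    then show "(x+y,a+b) \<in> \<Union>C" using ok unfolding hb_ok_def by blast
  next
    fix x a c assume "(x,a) \<in> \<Union>C"
    then obtain G where "G \<in> C" "(x,a) \<in> G" by blast
    then show "(c *\<^sub>R x, c*a) \<in> \<Union>C" using ok unfolding hb_ok_def by blast
  next
    fix x a assume "(x,a) \<in> \<Union>C"
    then obtain G where "G \<in> C" "(x,a) \<in> G" by blast
    then show "a \<le> p x" using ok unfolding hb_ok_def by blast
  qed
qed

lemma hb_step:
  fixes p :: "'a::real_vector \<Rightarrow> real"
  assumes sub: "\<And>x y. p (x + y) \<le> p x + p y"
    and hom: "\<And>r x. r \<ge> 0 \<Longrightarrow> p (r *\<^sub>R x) = r * p x"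
    and ok: "hb_ok p z0 M" and z: "z \<notin> Domain M"
  shows "\<exists>M'. hb_ok p z0 M' \<and> M \<subseteq> M' \<and> M' \<noteq> M"
proof -
  have fn: "\<And>x a b. (x,a)\<in>M \<Longrightarrow> (x,b)\<in>M \<Longrightarrow> a = b"
   and add: "\<And>x y a b. (x,a)\<in>M \<Longrightarrow> (y,b)\<in>M \<Longrightarrow> (x+y,a+b)\<in>M"
   and scl: "\<And>x a c. (x,a)\<in>M \<Longrightarrow> (c *\<^sub>R x, c*a)\<in>M"
   and dom: "\<And>x a. (x,a)\<in>M \<Longrightarrow> a \<le> p x"
   and g0: "\<And>t. (t *\<^sub>R z0, t * p z0) \<in> M"
    using ok unfolding hb_ok_def by blast+
  have zero: "(0,0) \<in> M" using g0[of 0] by simp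
  have neg: "(-x, -a) \<in> M" if "(x,a) \<in> M" for x a using scl[OF that, of "-1"] by simp
  have diff: "(x - y, a - b) \<in> M" if "(x,a) \<in> M" "(y,b) \<in> M" for x y a b
    using add[OF that(1) neg[OF that(2)]] by simp
  define S where "S = {a - p (y - z) | y a. (y,a) \<in> M}"
  have Sne: "S \<noteq> {}" using zero unfolding S_def by blast
  have key: "a - p (y - z) \<le> p (y' + z) - b" if "(y,a)\<in>M" "(y',b)\<in>M" for y a y' b
  proof -
    have "a + b \<le> p (y + y')" using dom[OF add[OF that]] .
    also have "p (y + y') \<le> p (y - z) + p (y' + z)" using sub[of "y - z" "y' + z"] by simp
    finally show ?thesis by simp
  qed
  have Sbdd: "bdd_above S" unfolding S_def bdd_above_def
    using key[OF _ zero] by auto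
  define c where "c = Sup S"
  have c_lo: "a - p (y - z) \<le> c" if "(y,a)\<in>M" for y a
    unfolding c_def by (rule cSup_upper[OF _ Sbdd]) (use that S_def in blast)
  have c_hi: "c \<le> p (y' + z) - b" if "(y',b)\<in>M" for y' b
    unfolding c_def by (rule cSup_least[OF Sne]) (use key that S_def in blast)
  define M' where "M' = {(x + t *\<^sub>R z, a + t * c) | x a t. (x,a) \<in> M}"
  have uniq: "t = t' \<and> x = x'" if "(x,a)\<in>M" "(x',a')\<in>M" "x + t *\<^sub>R z = x' + t' *\<^sub>R z" for x a x' a' t t'
  proof (cases "t = t'")
    case True then show ?thesis using that by simp
  next
    case False
    have "(x' - x, a' - a) \<in> M" using diff that(1,2) by blast
    then have "((1/(t - t')) *\<^sub>R (x' - x), (1/(t-t')) * (a' - a)) \<in> M" by (rule scl)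
    moreover have "(1/(t - t')) *\<^sub>R (x' - x) = z"
    proof -
      have "x' - x = (t - t') *\<^sub>R z" using that(3) by (simp add: algebra_simps)
      then show ?thesis using False by simp
    qed
    ultimately have "z \<in> Domain M" by force
    with z show ?thesis by simp
  qed
  have MM: "M \<subseteq> M'" unfolding M'_def by force
  have "hb_ok p z0 M'" unfolding hb_ok_def
  proof (intro conjI allI impI)
    show "{(t *\<^sub>R z0, t * p z0) | t. True} \<subseteq> M'"
      using g0 MM by blast
  next
    fix x a b assume "(x,a) \<in> M'" "(x,b) \<in> M'"
    then obtain x1 a1 t1 x2 a2 t2 where h: "(x1,a1)\<in>M" "(x2,a2)\<in>M" "x = x1 + t1 *\<^sub>R z" "a = a1 + t1*c"
      "x = x2 + t2 *\<^sub>R z" "b = a2 + t2 * c" unfolding M'_def by blast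
    then have "t1 = t2 \<and> x1 = x2" using uniq[of x1 a1 x2 a2 t1 t2] by simp
    then show "a = b" using h fn by auto
  next
    fix x y a b assume "(x,a) \<in> M'" "(y,b) \<in> M'"
    then obtain x1 a1 t1 x2 a2 t2 where h: "(x1,a1)\<in>M" "(x2,a2)\<in>M" "x = x1 + t1 *\<^sub>R z" "a = a1 + t1*c"
      "y = x2 + t2 *\<^sub>R z" "b = a2 + t2 * c" unfolding M'_def by blast
    have "(x + y, a + b) = ((x1 + x2) + (t1 + t2) *\<^sub>R z, (a1 + a2) + (t1 + t2) * c)"
      using h by (simp add: algebra_simps)
    then show "(x+y,a+b) \<in> M'" unfolding M'_def using add[OF h(1,2)] by blast
  next
    fix x a r assume "(x,a) \<in> M'"
    then obtain x1 a1 t1 where h: "(x1,a1)\<in>M" "x = x1 + t1 *\<^sub>R z" "a = a1 + t1*c"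
      unfolding M'_def by blast
    have "(r *\<^sub>R x, r * a) = (r *\<^sub>R x1 + (r*t1) *\<^sub>R z, r * a1 + (r*t1) * c)"
      using h by (simp add: algebra_simps)
    then show "(r *\<^sub>R x, r*a) \<in> M'" unfolding M'_def using scl[OF h(1)] by blast
  next
    fix x a assume "(x,a) \<in> M'"
    then obtain x1 a1 t where h: "(x1,a1)\<in>M" "x = x1 + t *\<^sub>R z" "a = a1 + t*c"
      unfolding M'_def by blast
    show "a \<le> p x"
    proof (cases "t = 0")
      case True then show ?thesis using h dom by simp
    next
      case False
      show ?thesis
      proof (cases "t > 0")
        case True
        have m: "((1/t) *\<^sub>R x1, (1/t) * a1) \<in> M" using scl[OF h(1)] .
        have "c \<le> p ((1/t) *\<^sub>R x1 + z) - (1/t) * a1" using c_hi[OF m] .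
        then have "t * c \<le> t * p ((1/t) *\<^sub>R x1 + z) - a1" using True
          by (simp add: field_simps)
        also have "t * p ((1/t) *\<^sub>R x1 + z) = p (t *\<^sub>R ((1/t) *\<^sub>R x1 + z))"
          using hom[of t] True by simp
        also have "t *\<^sub>R ((1/t) *\<^sub>R x1 + z) = x1 + t *\<^sub>R z" using True
          by (simp add: algebra_simps)
        finally show ?thesis using h by simp
      next
        case False
        define s where "s = - t"
        have s: "s > 0" using False \<open>t \<noteq> 0\<close> s_def by simp
        have m: "((1/s) *\<^sub>R x1, (1/s) * a1) \<in> M" using scl[OF h(1)] .
        have "(1/s) * a1 - p ((1/s) *\<^sub>R x1 - z) \<le> c" using c_lo[OF m] .
        then have "a1 - s * p ((1/s) *\<^sub>R x1 - z) \<le> s * c" using s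
          by (simp add: field_simps)
        also have "s * p ((1/s) *\<^sub>R x1 - z) = p (s *\<^sub>R ((1/s) *\<^sub>R x1 - z))"
          using hom[of s] s by simp
        also have "s *\<^sub>R ((1/s) *\<^sub>R x1 - z) = x1 + t *\<^sub>R z" using s s_def
          by (simp add: algebra_simps)
        finally show ?thesis using h s_def by simp
      qed
    qed
  qed
  moreover note MM
  moreover have "M' \<noteq> M"
  proof
    assume "M' = M"
    moreover have "(0 + 1 *\<^sub>R z, 0 + 1 * c) \<in> M'" unfolding M'_def using zero by blast
    ultimately show False using z by force
  qed
  ultimately show ?thesis by blast
qed

lemma hb_init:
  fixes p :: "'a::real_vector \<Rightarrow> real"
  assumes sub: "\<And>x y. p (x + y) \<le> p x + p y"
    and hom: "\<And>r x. r \<ge> 0 \<Longrightarrow> p (r *\<^sub>R x) = r * p x"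
  shows "hb_ok p z0 {(t *\<^sub>R z0, t * p z0) | t. True}"
proof -
  have p0: "p 0 = 0" using hom[of 0 0] by simp
  show ?thesis unfolding hb_ok_def
  proof (intro conjI allI impI)
    fix x a b assume "(x,a) \<in> {(t *\<^sub>R z0, t * p z0) | t. True}" "(x,b) \<in> {(t *\<^sub>R z0, t * p z0) | t. True}"
    then obtain t t' where h: "x = t *\<^sub>R z0" "a = t * p z0" "x = t' *\<^sub>R z0" "b = t' * p z0" by blast
    then have "t = t' \<or> z0 = 0" by (metis scaleR_cancel_right)
    then show "a = b" using h p0 by auto
  next
    fix x y a b assume "(x,a) \<in> {(t *\<^sub>R z0, t * p z0) | t. True}" "(y,b) \<in> {(t *\<^sub>R z0, t * p z0) | t. True}"
    then obtain t t' where h: "x = t *\<^sub>R z0" "a = t * p z0" "y = t' *\<^sub>R z0" "b = t' * p z0" by blast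
    then have "(x+y, a+b) = ((t+t') *\<^sub>R z0, (t+t') * p z0)" by (simp add: algebra_simps)
    then show "(x+y,a+b) \<in> {(t *\<^sub>R z0, t * p z0) | t. True}" by blast
  next
    fix x a c assume "(x,a) \<in> {(t *\<^sub>R z0, t * p z0) | t. True}"
    then obtain t where h: "x = t *\<^sub>R z0" "a = t * p z0" by blast
    then have "(c *\<^sub>R x, c*a) = ((c*t) *\<^sub>R z0, (c*t) * p z0)" by simp
    then show "(c *\<^sub>R x, c*a) \<in> {(t *\<^sub>R z0, t * p z0) | t. True}" by blast
  next
    fix x a assume "(x,a) \<in> {(t *\<^sub>R z0, t * p z0) | t. True}"
    then obtain t where h: "x = t *\<^sub>R z0" "a = t * p z0" by blast
    show "a \<le> p x"
    proof (cases "t \<ge> 0")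
      case True then show ?thesis using h hom by simp
    next
      case False
      have "p 0 \<le> p (t *\<^sub>R z0) + p ((-t) *\<^sub>R z0)" using sub[of "t *\<^sub>R z0" "(-t) *\<^sub>R z0"]
        by (simp add: scaleR_left_distrib[symmetric])
      then show ?thesis using h hom[of "-t" z0] False p0 by simp
    qed
  qed simp
qed

lemma hahn_banach_sublinear:
  fixes p :: "'a::real_vector \<Rightarrow> real"
  assumes sub: "\<And>x y. p (x + y) \<le> p x + p y"
    and hom: "\<And>r x. r \<ge> 0 \<Longrightarrow> p (r *\<^sub>R x) = r * p x"
  shows "\<exists>\<psi>. linear \<psi> \<and> (\<forall>x. \<psi> x \<le> p x) \<and> \<psi> z0 = p z0"
proof -
  let ?F = "{G. hb_ok p z0 G}"
  have "\<exists>M\<in>?F. \<forall>X\<in>?F. M \<subseteq> X \<longrightarrow> X = M"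
  proof (rule Zorn_Lemma2, intro ballI)
    fix C assume C: "C \<in> chains ?F"
    show "\<exists>U\<in>?F. \<forall>X\<in>C. X \<subseteq> U"
    proof (cases "C = {}")
      case True then show ?thesis using hb_init[OF sub hom] by blast
    next
      case False then show ?thesis using hb_chain[OF C False] by blast
    qed
  qed
  then obtain M where M: "hb_ok p z0 M" and max: "\<And>X. hb_ok p z0 X \<Longrightarrow> M \<subseteq> X \<Longrightarrow> X = M" by blast
  have dom: "x \<in> Domain M" for x
  proof (rule ccontr)
    assume "x \<notin> Domain M"
    from hb_step[OF sub hom M this] max show False by blast
  qed
  have fn: "\<And>x a b. (x,a)\<in>M \<Longrightarrow> (x,b)\<in>M \<Longrightarrow> a = b"
   and add: "\<And>x y a b. (x,a)\<in>M \<Longrightarrow> (y,b)\<in>M \<Longrightarrow> (x+y,a+b)\<in>M"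
   and scl: "\<And>x a c. (x,a)\<in>M \<Longrightarrow> (c *\<^sub>R x, c*a)\<in>M"
   and dm: "\<And>x a. (x,a)\<in>M \<Longrightarrow> a \<le> p x"
   and g0: "\<And>t. (t *\<^sub>R z0, t * p z0) \<in> M"
    using M unfolding hb_ok_def by blast+
  define \<psi> where "\<psi> x = (THE a. (x,a) \<in> M)" for x
  have in\<psi>: "(x, \<psi> x) \<in> M" for x
  proof -
    obtain a where "(x,a) \<in> M" using dom[of x] by auto
    then show ?thesis unfolding \<psi>_def by (rule theI) (use fn \<open>(x,a) \<in> M\<close> in blast)
  qed
  have ev: "\<psi> x = a" if "(x,a) \<in> M" for x a using fn[OF that in\<psi>] by simp
  have "linear \<psi>"
  proof (rule linearI)
    fix x y show "\<psi> (x + y) = \<psi> x + \<psi> y" using ev[OF add[OF in\<psi> in\<psi>]] .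
  next
    fix r x show "\<psi> (r *\<^sub>R x) = r *\<^sub>R \<psi> x" using ev[OF scl[OF in\<psi>]] by simp
  qed
  moreover have "\<forall>x. \<psi> x \<le> p x" using dm in\<psi> by blast
  moreover have "\<psi> z0 = p z0" using ev[OF g0[of 1]] by simp
  ultimately show ?thesis by blast
qed



lemma cont_univ_comp: "continuous_on UNIV f \<Longrightarrow> continuous_on UNIV g \<Longrightarrow> continuous_on UNIV (\<lambda>x. g (f x))"
  by (rule continuous_on_compose2[where t=UNIV]) auto

lemma tvs_open_affine:
  fixes U :: "'a::{real_vector,topological_space} set"
  assumes tvs: "topological_vector_space TYPE('a)" and U: "open U"
  shows "open {x. c *\<^sub>R x + a \<in> U}"
proof -
  have add: "continuous_on UNIV (\<lambda>p::'a \<times> 'a. fst p + snd p)"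
   and mul: "continuous_on UNIV (\<lambda>p::real \<times> 'a. fst p *\<^sub>R snd p)"
    using tvs unfolding topological_vector_space_def by auto
  have c1: "continuous_on UNIV (\<lambda>x::'a. c *\<^sub>R x)"
    using cont_univ_comp[OF _ mul, of "\<lambda>x. (c, x)"] by (simp add: continuous_on_Pair continuous_on_const continuous_on_id)
  have c2: "continuous_on UNIV (\<lambda>x::'a. x + a)"
    using cont_univ_comp[OF _ add, of "\<lambda>x. (x, a)"] by (simp add: continuous_on_Pair continuous_on_const continuous_on_id)
  have "continuous_on UNIV (\<lambda>x::'a. c *\<^sub>R x + a)" using cont_univ_comp[OF c1 c2] .
  from open_vimage[OF U this] show ?thesis by (simp add: vimage_def)
qed

lemma tvs_open_ray:
  fixes U :: "'a::{real_vector,topological_space} set"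
  assumes tvs: "topological_vector_space TYPE('a)" and U: "open U"
  shows "open {t::real. t *\<^sub>R x \<in> U}"
proof -
  have mul: "continuous_on UNIV (\<lambda>p::real \<times> 'a. fst p *\<^sub>R snd p)"
    using tvs unfolding topological_vector_space_def by auto
  have "continuous_on UNIV (\<lambda>t::real. t *\<^sub>R x)"
    using cont_univ_comp[OF _ mul, of "\<lambda>t. (t, x)"] by (simp add: continuous_on_Pair continuous_on_const continuous_on_id)
  from open_vimage[OF U this] show ?thesis by (simp add: vimage_def)
qed

lemma open_real_nbhd:
  fixes S :: "real set"
  assumes "open S" "a \<in> S"
  obtains e where "e > 0" "\<And>s. \<bar>s - a\<bar> < e \<Longrightarrow> s \<in> S"
  using assms open_contains_ball[of S] by (force simp: ball_def dist_real_def abs_minus_commute subset_eq)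

definition mink :: "'a::real_vector set \<Rightarrow> 'a \<Rightarrow> real" where
  "mink N x = Inf {t. t > 0 \<and> (1/t) *\<^sub>R x \<in> N}"

locale mink_setup =
  fixes N :: "'a::{real_vector,topological_space} set"
  assumes tvs: "topological_vector_space TYPE('a)"
    and N_open: "open N" and N_conv: "convex N" and N0: "0 \<in> N"
begin

definition "T x = {t. t > 0 \<and> (1/t) *\<^sub>R x \<in> N}"

lemma mink_T: "mink N x = Inf (T x)" unfolding mink_def T_def ..

lemma T_ne: "T x \<noteq> {}"
proof -
  have "open {s::real. s *\<^sub>R x \<in> N}" by (rule tvs_open_ray[OF tvs N_open])
  moreover have "0 \<in> {s::real. s *\<^sub>R x \<in> N}" using N0 by simp
  ultimately obtain e where e: "e > 0" "\<And>s. \<bar>s - 0\<bar> < e \<Longrightarrow> s \<in> {s::real. s *\<^sub>R x \<in> N}"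
    by (meson open_real_nbhd)
  have "(e/2) *\<^sub>R x \<in> N" using e(2)[of "e/2"] e(1) by simp
  then have "2/e \<in> T x" unfolding T_def using e(1) by simp
  then show ?thesis by blast
qed

lemma T_bdd: "bdd_below (T x)" unfolding T_def bdd_below_def by (rule exI[of _ 0]) auto

lemma mink_le: "t \<in> T x \<Longrightarrow> mink N x \<le> t"
  unfolding mink_T by (rule cInf_lower[OF _ T_bdd])

lemma mink_ge: "(\<And>t. t \<in> T x \<Longrightarrow> c \<le> t) \<Longrightarrow> c \<le> mink N x"
  unfolding mink_T by (rule cInf_greatest[OF T_ne])

lemma mink_nonneg: "mink N x \<ge> 0"
  by (rule mink_ge) (auto simp: T_def)

lemma T_up: assumes "t \<in> T x" "t \<le> t'" shows "t' \<in> T x"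
proof -
  have t: "t > 0" "(1/t) *\<^sub>R x \<in> N" using assms(1) unfolding T_def by auto
  have t': "t' > 0" using t assms(2) by simp
  have "(t/t') *\<^sub>R ((1/t) *\<^sub>R x) + (1 - t/t') *\<^sub>R 0 \<in> N"
    using convexD[OF N_conv t(2) N0, of "t/t'" "1 - t/t'"] t t' assms(2) by simp
  moreover have "(t/t') *\<^sub>R ((1/t) *\<^sub>R x) + (1 - t/t') *\<^sub>R 0 = (1/t') *\<^sub>R x"
  proof -
    have "(t/t') * (1/t) = 1/t'" using t by simp
    then show ?thesis by (simp only: scaleR_scaleR scaleR_zero_right add_0_right)
  qed
  ultimately have "(1/t') *\<^sub>R x \<in> N" by metis
  then show ?thesis unfolding T_def using t' by simp
qed

lemma T_scale: assumes "r > 0" "t \<in> T x" shows "r * t \<in> T (r *\<^sub>R x)"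
  using assms unfolding T_def by simp

lemma mink_hom_le: assumes "r > 0" shows "mink N (r *\<^sub>R x) \<le> r * mink N x"
proof -
  have "mink N (r *\<^sub>R x) / r \<le> mink N x"
  proof (rule mink_ge)
    fix t assume "t \<in> T x"
    then have "mink N (r *\<^sub>R x) \<le> r * t" by (rule mink_le[OF T_scale[OF assms]])
    then show "mink N (r *\<^sub>R x) / r \<le> t" using assms by (simp add: field_simps)
  qed
  then show ?thesis using assms by (simp add: field_simps)
qed

lemma mink_hom: assumes "r \<ge> 0" shows "mink N (r *\<^sub>R x) = r * mink N x"
proof (cases "r = 0")
  case True
  have "mink N 0 \<le> 0"
  proof (rule ccontr)
    assume "\<not> mink N 0 \<le> 0"
    then have "mink N 0 / 2 \<in> T 0" unfolding T_def using N0 by simp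
    from mink_le[OF this] \<open>\<not> mink N 0 \<le> 0\<close> show False by simp
  qed
  then show ?thesis using True mink_nonneg[of 0] by simp
next
  case False
  then have r: "r > 0" using assms by simp
  have "mink N x = mink N ((1/r) *\<^sub>R (r *\<^sub>R x))" using r by simp
  also have "\<dots> \<le> (1/r) * mink N (r *\<^sub>R x)" by (rule mink_hom_le) (use r in simp)
  finally have "r * mink N x \<le> mink N (r *\<^sub>R x)" using r by (simp add: field_simps)
  with mink_hom_le[OF r, of x] show ?thesis by simp
qed

lemma mink_sub: "mink N (x + y) \<le> mink N x + mink N y"
proof -
  have st: "s + t \<in> T (x + y)" if s: "s \<in> T x" and t: "t \<in> T y" for s t
  proof -
    have s': "s > 0" "(1/s) *\<^sub>R x \<in> N" and t': "t > 0" "(1/t) *\<^sub>R y \<in> N" using s t unfolding T_def by auto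
    have "(s/(s+t)) *\<^sub>R ((1/s) *\<^sub>R x) + (t/(s+t)) *\<^sub>R ((1/t) *\<^sub>R y) \<in> N"
    proof (rule convexD[OF N_conv s'(2) t'(2)])
      have st: "s + t > 0" using s' t' by simp
      show "0 \<le> s / (s + t)" "0 \<le> t / (s + t)" using s' t' by auto
      show "s / (s + t) + t / (s + t) = 1" using st by (simp add: add_divide_distrib[symmetric])
    qed
    moreover have "(s/(s+t)) *\<^sub>R ((1/s) *\<^sub>R x) + (t/(s+t)) *\<^sub>R ((1/t) *\<^sub>R y) = (1/(s+t)) *\<^sub>R (x + y)"
      using s' t' by (simp add: scaleR_add_right)
    ultimately show ?thesis unfolding T_def using s' t' by simp
  qed
  have "mink N (x + y) - mink N y \<le> mink N x"
  proof (rule mink_ge)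
    fix s assume s: "s \<in> T x"
    have "mink N (x + y) - s \<le> mink N y"
    proof (rule mink_ge)
      fix t assume "t \<in> T y"
      from mink_le[OF st[OF s this]] show "mink N (x + y) - s \<le> t" by simp
    qed
    then show "mink N (x + y) - mink N y \<le> s" by simp
  qed
  then show ?thesis by simp
qed

lemma mink_lt1: assumes "x \<in> N" shows "mink N x < 1"
proof -
  have "open {s::real. s *\<^sub>R x \<in> N}" by (rule tvs_open_ray[OF tvs N_open])
  moreover have "1 \<in> {s::real. s *\<^sub>R x \<in> N}" using assms by simp
  ultimately obtain e where e: "e > 0" "\<And>s. \<bar>s - 1\<bar> < e \<Longrightarrow> s \<in> {s::real. s *\<^sub>R x \<in> N}"
    by (meson open_real_nbhd)
  define s where "s = 1 + e/2"
  have "s *\<^sub>R x \<in> N" using e s_def by simp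
  then have "1/s \<in> T x" unfolding T_def using e s_def by simp
  then have "mink N x \<le> 1/s" by (rule mink_le)
  also have "1/s < 1" using e s_def by simp
  finally show ?thesis .
qed

lemma mink_ge1: assumes "x \<notin> N" shows "mink N x \<ge> 1"
proof (rule ccontr)
  assume "\<not> mink N x \<ge> 1"
  then have "Inf (T x) < 1" by (simp add: mink_T)
  then obtain t where "t \<in> T x" "t < 1" using cInf_lessD[OF T_ne] by blast
  then have "1 \<in> T x" using T_up by simp
  then show False using assms unfolding T_def by simp
qed

end


lemma linear_cont_from_nbhd:
  fixes \<psi> :: "'a::{real_vector,topological_space} \<Rightarrow> real"
  assumes tvs: "topological_vector_space TYPE('a)" and lin: "linear \<psi>"
    and W: "open W" "0 \<in> W" and bd: "\<And>w. w \<in> W \<Longrightarrow> \<bar>\<psi> w\<bar> < 1"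
  shows "continuous_on UNIV \<psi>"
proof -
  have "open (\<psi> -` S)" if S: "open S" for S
  proof (subst open_subopen, intro ballI)
    fix y assume "y \<in> \<psi> -` S"
    then obtain e where e: "e > 0" "\<And>s. \<bar>s - \<psi> y\<bar> < e \<Longrightarrow> s \<in> S"
      using open_real_nbhd[OF S] by (metis vimageE)
    define T where "T = {x. (1/e) *\<^sub>R x + (- ((1/e) *\<^sub>R y)) \<in> W}"
    have "open T" unfolding T_def by (rule tvs_open_affine[OF tvs W(1)])
    moreover have "y \<in> T" unfolding T_def using W(2) by simp
    moreover have "T \<subseteq> \<psi> -` S"
    proof
      fix x assume "x \<in> T"
      then have "\<bar>\<psi> ((1/e) *\<^sub>R x + (- ((1/e) *\<^sub>R y)))\<bar> < 1" unfolding T_def using bd by blast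
      moreover have "\<psi> ((1/e) *\<^sub>R x + (- ((1/e) *\<^sub>R y))) = (\<psi> x - \<psi> y) / e"
        using lin by (simp add: linear_diff[OF lin] linear_scale[OF lin] diff_divide_distrib)
      ultimately have "\<bar>\<psi> x - \<psi> y\<bar> < e" using e(1) by (simp add: abs_divide divide_less_eq)
      then show "x \<in> \<psi> -` S" using e(2) by simp
    qed
    ultimately show "\<exists>T. open T \<and> y \<in> T \<and> T \<subseteq> \<psi> -` S" by blast
  qed
  then show ?thesis using continuous_on_open_vimage[of UNIV \<psi>] by simp
qed

lemma separation:
  fixes K :: "'a::{real_vector,topological_space} set"
  assumes tvs: "topological_vector_space TYPE('a)" and lc: "locally_convex TYPE('a)"
    and K: "convex K" "closed K" and x0: "x0 \<notin> K"
  shows "\<exists>\<psi>\<in>top_dual. \<forall>k\<in>K. \<psi> x0 < \<psi> k"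
proof (cases "K = {}")
  case True
  have "(\<lambda>x::'a. 0::real) \<in> top_dual" unfolding top_dual_def
    by (simp add: linearI continuous_on_const)
  then show ?thesis using True by blast
next
  case False
  then obtain k0 where k0: "k0 \<in> K" by blast
  have "open {u. 1 *\<^sub>R u + x0 \<in> - K}" by (rule tvs_open_affine[OF tvs]) (use K(2) in auto)
  then have "open {u. u + x0 \<notin> K}" by simp
  moreover have "0 \<in> {u. u + x0 \<notin> K}" using x0 by simp
  ultimately obtain V where V: "open V" "convex V" "0 \<in> V" "V \<subseteq> {u. u + x0 \<notin> K}"
    using lc unfolding locally_convex_def by blast
  define z0 where "z0 = k0 - x0"
  define N where "N = {z0 - (k - x0) + v | k v. k \<in> K \<and> v \<in> V}"
  have N_eq: "N = (\<Union>k\<in>K. {u. 1 *\<^sub>R u + (- (z0 - (k - x0))) \<in> V})"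
    unfolding N_def by (auto simp: algebra_simps) (metis add.commute diff_add_cancel)
  have N_open: "open N" unfolding N_eq
    by (intro open_UN ballI tvs_open_affine[OF tvs V(1)])
  have N_conv: "convex N"
  proof (rule convexI)
    fix x y and u v :: real assume x: "x \<in> N" and y: "y \<in> N" and uv0: "0 \<le> u" "0 \<le> v" "u + v = 1"
    have uv: "0 \<le> u \<and> 0 \<le> v \<and> u + v = 1" using uv0 by simp
    obtain k1 v1 where 1: "k1 \<in> K" "v1 \<in> V" "x = z0 - (k1 - x0) + v1" using x unfolding N_def by blast
    obtain k2 v2 where 2: "k2 \<in> K" "v2 \<in> V" "y = z0 - (k2 - x0) + v2" using y unfolding N_def by blast
    have "u *\<^sub>R k1 + v *\<^sub>R k2 \<in> K" using convexD[OF K(1) 1(1) 2(1)] uv by blast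
    moreover have "u *\<^sub>R v1 + v *\<^sub>R v2 \<in> V" using convexD[OF V(2) 1(2) 2(2)] uv by blast
    moreover have "u *\<^sub>R x + v *\<^sub>R y = z0 - ((u *\<^sub>R k1 + v *\<^sub>R k2) - x0) + (u *\<^sub>R v1 + v *\<^sub>R v2)"
    proof -
      have "u *\<^sub>R x + v *\<^sub>R y = (u + v) *\<^sub>R z0 - ((u *\<^sub>R k1 + v *\<^sub>R k2) - (u + v) *\<^sub>R x0) + (u *\<^sub>R v1 + v *\<^sub>R v2)"
        unfolding 1(3) 2(3) by (simp add: algebra_simps)
      then show ?thesis using uv by simp
    qed
    ultimately show "u *\<^sub>R x + v *\<^sub>R y \<in> N" unfolding N_def by blast
  qed
  have N0: "0 \<in> N" unfolding N_def z0_def using k0 V(3) by force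
  interpret mink_setup N by unfold_locales (fact tvs N_open N_conv N0)+
  have z0N: "z0 \<notin> N"
  proof
    assume "z0 \<in> N"
    then obtain k v where "k \<in> K" "v \<in> V" "z0 = z0 - (k - x0) + v" unfolding N_def by blast
    then have "v + x0 = k" by (simp add: algebra_simps)
    then show False using V(4) \<open>v \<in> V\<close> \<open>k \<in> K\<close> by auto
  qed
  obtain \<psi> where lin: "linear \<psi>" and le: "\<And>x. \<psi> x \<le> mink N x" and pz: "\<psi> z0 = mink N z0"
    using hahn_banach_sublinear[of "mink N" z0] mink_sub mink_hom by blast
  have p1: "\<psi> z0 \<ge> 1" using pz mink_ge1[OF z0N] by simp
  have lt1: "\<psi> w < 1" if "w \<in> N" for w using le[of w] mink_lt1[OF that] by simp
  define W where "W = N \<inter> {w. (-1) *\<^sub>R w + 0 \<in> N}"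
  have "open {w. (-1) *\<^sub>R w + 0 \<in> N}" by (rule tvs_open_affine[OF tvs N_open])
  then have W: "open W" "0 \<in> W" unfolding W_def using N_open N0
    by (auto intro!: open_Int)
  have "\<bar>\<psi> w\<bar> < 1" if "w \<in> W" for w
  proof -
    have "\<psi> w < 1" using lt1 that unfolding W_def by blast
    moreover have "\<psi> (-w) < 1" using lt1 that unfolding W_def by simp
    ultimately show ?thesis using linear_neg[OF lin, of w] by simp
  qed
  then have cont: "continuous_on UNIV \<psi>" by (rule linear_cont_from_nbhd[OF tvs lin W])
  have "\<psi> x0 < \<psi> k" if k: "k \<in> K" for k
  proof -
    have "z0 - (k - x0) + 0 \<in> N" unfolding N_def using k V(3) by blast
    then have "\<psi> (z0 - (k - x0)) < 1" using lt1 by simp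
    then have "\<psi> z0 - \<psi> k + \<psi> x0 < 1" using lin by (simp add: linear_diff)
    then show ?thesis using p1 by simp
  qed
  moreover have "\<psi> \<in> top_dual" unfolding top_dual_def using lin cont by simp
  ultimately show ?thesis by blast
qed



theorem mainTheorem19:
  fixes C :: "'a::{real_vector,topological_space} set"
    and P :: "(real^'n::finite) set"
    and V0 :: "real^'n \<Rightarrow> real"
    and V1 :: "real^'n \<Rightarrow> 'a"
    and A :: "'a set"
  assumes tvs: "topological_vector_space TYPE('a)"
    and lc: "locally_convex TYPE('a)"
    and cone_C: "convex C" "cone C" "0 \<in> C"
    and P0: "0 \<in> P"
    and V0_0: "V0 0 = 0" and V0_ineq: "\<And>x. V0 x \<ge> - V0 (- x)"
    and V1_0: "V1 0 = 0" and V1_ineq: "\<And>x. cone_le C (V1 x) (- V1 (- x))"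
    and A0: "0 \<in> A" and A_mono: "\<And>X Z. X \<in> A \<Longrightarrow> Z \<in> C \<Longrightarrow> X + Z \<in> A"
    and proper: "proper_risk (risk_measure P V0 V1 A)"
    and qc: "quasiconvex_fun (risk_measure P V0 V1 A)"
    and lsc: "lsc_fun (risk_measure P V0 V1 A)"
  shows "barrier_cone A \<noteq> {} \<and>
    (\<forall>X. risk_measure P V0 V1 A X =
           (SUP \<psi>\<in>barrier_cone A. cond_risk (risk_measure P V0 V1 A) X \<psi>))"
proof -
  define \<rho> where "\<rho> = risk_measure P V0 V1 A"
  have zB: "(\<lambda>x::'a. 0::real) \<in> barrier_cone A"
  proof -
    have "(\<lambda>x::'a. 0::real) \<in> top_dual" unfolding top_dual_def
      by (simp add: linearI continuous_on_const)
    moreover have "(\<lambda>X. ereal ((\<lambda>x::'a. 0::real) X)) ` A = {0}" using A0 by auto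
    ultimately show ?thesis unfolding barrier_cone_def support_inf_def by simp
  qed
  have main: "\<rho> X = (SUP \<psi>\<in>barrier_cone A. cond_risk \<rho> X \<psi>)" for X
  proof (rule antisym)
    show "(SUP \<psi>\<in>barrier_cone A. cond_risk \<rho> X \<psi>) \<le> \<rho> X"
    proof (rule SUP_least)
      fix \<psi> show "cond_risk \<rho> X \<psi> \<le> \<rho> X" unfolding cond_risk_def by (rule Inf_lower) blast
    qed
  next
    show "\<rho> X \<le> (SUP \<psi>\<in>barrier_cone A. cond_risk \<rho> X \<psi>)"
    proof (rule ccontr)
      let ?S = "(SUP \<psi>\<in>barrier_cone A. cond_risk \<rho> X \<psi>)"
      assume "\<not> \<rho> X \<le> ?S"
      then obtain c where c: "?S < ereal c" "ereal c < \<rho> X" using ereal_dense2 by (meson not_le)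
      have good: "False" if "\<psi> \<in> barrier_cone A" "ereal c \<le> cond_risk \<rho> X \<psi>" for \<psi>
      proof -
        have "cond_risk \<rho> X \<psi> \<le> ?S" using that(1) by (rule SUP_upper)
        then show False using that(2) c(1) by simp
      qed
      show False
      proof (cases "\<exists>Y. \<rho> Y < ereal c")
        case False
        have "ereal c \<le> cond_risk \<rho> X (\<lambda>x. 0)" unfolding cond_risk_def
          by (rule Inf_greatest) (use False in \<open>auto simp: not_less\<close>)
        then show False using good[OF zB] by blast
      next
        case True
        then obtain Y where "\<rho> Y < ereal c" by blast
        then obtain x where x: "x \<in> P" "Y + V1 x \<in> A" "ereal (V0 x) < ereal c"
          unfolding \<rho>_def risk_measure_def by (auto simp: Inf_less_iff)
        define K where "K = {Y. \<rho> Y \<le> ereal c}"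
        have Kc: "closed K" using lsc unfolding K_def lsc_fun_def \<rho>_def by blast
        have Kv: "convex K"
        proof (rule convexI)
          fix a b and u v :: real assume a: "a \<in> K" and b: "b \<in> K" and uv: "0 \<le> u" "0 \<le> v" "u + v = 1"
          have "\<rho> (u *\<^sub>R a + (1 - u) *\<^sub>R b) \<le> max (\<rho> a) (\<rho> b)"
            using qc uv unfolding quasiconvex_fun_def \<rho>_def by simp
          moreover have "1 - u = v" using uv by simp
          ultimately have "\<rho> (u *\<^sub>R a + v *\<^sub>R b) \<le> max (\<rho> a) (\<rho> b)" by simp
          moreover have "max (\<rho> a) (\<rho> b) \<le> ereal c" using a b unfolding K_def by simp
          ultimately show "u *\<^sub>R a + v *\<^sub>R b \<in> K" unfolding K_def by (metis (mono_tags) mem_Collect_eq order_trans)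
        qed
        have XK: "X \<notin> K" using c(2) unfolding K_def by simp
        obtain \<psi> where \<psi>: "\<psi> \<in> top_dual" and sep: "\<And>k. k \<in> K \<Longrightarrow> \<psi> X < \<psi> k"
          using separation[OF tvs lc Kv Kc XK] by blast
        have lin: "linear \<psi>" using \<psi> unfolding top_dual_def by simp
        have AK: "a - V1 x \<in> K" if "a \<in> A" for a
        proof -
          have "\<rho> (a - V1 x) \<le> ereal (V0 x)" unfolding \<rho>_def risk_measure_def
            by (rule Inf_lower) (use x(1) that in auto)
          moreover have "ereal (V0 x) \<le> ereal c" using x(3) by simp
          ultimately show ?thesis unfolding K_def by (metis (mono_tags) mem_Collect_eq order_trans)
        qed
        have "ereal (\<psi> X + \<psi> (V1 x)) \<le> support_inf A \<psi>" unfolding support_inf_def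
        proof (rule INF_greatest)
          fix a assume "a \<in> A"
          from sep[OF AK[OF this]] have "\<psi> X < \<psi> a - \<psi> (V1 x)" by (simp add: linear_diff[OF lin])
          then show "ereal (\<psi> X + \<psi> (V1 x)) \<le> ereal (\<psi> a)" by simp
        qed
        then have "\<psi> \<in> barrier_cone A" unfolding barrier_cone_def using \<psi>
          by (metis (mono_tags, lifting) MInfty_neq_ereal(1) ereal_infty_less(2) mem_Collect_eq order_less_le_trans)
        moreover have "ereal c \<le> cond_risk \<rho> X \<psi>" unfolding cond_risk_def
        proof (rule Inf_greatest)
          fix r assume "r \<in> {\<rho> Y |Y. \<psi> Y \<le> \<psi> X}"
          then obtain Y where "r = \<rho> Y" "\<psi> Y \<le> \<psi> X" by blast
          then have "Y \<notin> K" using sep by force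
          then show "ereal c \<le> r" using \<open>r = \<rho> Y\<close> unfolding K_def by simp
        qed
        ultimately show False using good by blast
      qed
    qed
  qed
  show ?thesis using zB main unfolding \<rho>_def by blast
qed

end
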